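(* Assume $J(x,y)=\mathcal{K}(x-y)$ with $\mathcal{K}$ even, satisfying (H0), (H0'), (H1), (H2). Let $E\subset\mathbb{R}^N$ be a bounded open set whose boundary has modulus of continuity $\varpi_0$, i.e. $\partial E$ is covered by finitely many open sets in each of which, after a rigid motion, $E$ coincides with the subgraph $\{(x',x_N): x_N<\eta(x')\}$ of a function $\eta$ defined on a ball of $\mathbb{R}^{N-1}$ with $|\eta(z_1)-\eta(z_2)|\le\varpi_0(|z_1-z_2|)$, where $\varpi_0:[0,\infty)\to[0,\infty)$ is continuous, increasing, $\varpi_0(0)=0$. If $$\int_0^\rho\frac{\varpi_0(s)\ell(s)}{s}\,ds<\infty,$$ then the $J$-perimeter $P_J(E)=\int_E\int_{E^c}\mathcal{K}(x-y)\,dy\,dx=\int_E\mathfrak{L}\mathds{1}_E(x)\,dx$ is finite.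
   Context: $N\ge1$, $B_\varepsilon=\{|z|<\varepsilon\}$. (H0): $J:\mathbb{R}^N\times\mathbb{R}^N\to[0,\infty)$ measurable, symmetric, $\sup_x\int\min(1,|x-y|^2)J(x,y)\,dy<\infty$. (H0'): $J(x,y)\ge\mathcal{K}(x-y)\ge0$ with $\mathcal{K}\notin L^1(B_\varepsilon)$ for all $\varepsilon>0$. (H1): there exist $\rho>0$ and $\ell:(0,\rho)\to(0,\infty)$, bounded above and below by positive constants on $[\varepsilon,\rho)$ for every $\varepsilon\in(0,\rho)$, with $\mathcal{K}(z)=|z|^{-N}\ell(|z|)$ for $0<|z|<\rho$ and $M(r):=\int_r^\rho\ell(s)/s\,ds\to\infty$ as $r\to0^+$. (H2): $\lim_{s\to0^+}\ell(\lambda s)/\ell(s)=1$ for all $\lambda>0$. $\mathfrak{L}u(x)=\mathrm{P.V.}\int_{\mathbb{R}^N}(u(x)-u(y))J(x,y)\,dy$; $\mathds{1}_E$ is the indicator of $E$. *)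

theory Defs
  imports "HOL-Analysis.Analysis"
begin

text \<open>The boundary of E has modulus of continuity w: the frontier of E is covered by
finitely many open sets U; for each U there is a rigid motion R (a surjective isometry
of the space), a unit vector e (playing the role of the N-th coordinate direction),
a ball D in the hyperplane orthogonal to e (a ball of R^(N-1)) and a function eta on D
with modulus w, such that after the motion E inside U coincides with the subgraph
of eta (points z + t e with z in D and t < eta z).\<close>

definition hyperball :: "'a::euclidean_space \<Rightarrow> 'a \<Rightarrow> real \<Rightarrow> 'a set" where
  "hyperball e c r = {z. z \<bullet> e = 0} \<inter> ball c r"

definition subgraph_dir :: "'a::euclidean_space \<Rightarrow> 'a set \<Rightarrow> ('a \<Rightarrow> real) \<Rightarrow> 'a set" where
  "subgraph_dir e D \<eta> =
     {y. y - (y \<bullet> e) *\<^sub>R e \<in> D \<and> y \<bullet> e < \<eta> (y - (y \<bullet> e) *\<^sub>R e)}"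

definition boundary_modulus :: "'a::euclidean_space set \<Rightarrow> (real \<Rightarrow> real) \<Rightarrow> bool" where
  "boundary_modulus E w \<longleftrightarrow>
     (\<exists>\<U>. finite \<U> \<and> (\<forall>U\<in>\<U>. open U) \<and> frontier E \<subseteq> \<Union>\<U> \<and>
       (\<forall>U\<in>\<U>. \<exists>(R::'a \<Rightarrow> 'a) (e::'a) (c::'a) (r::real) (\<eta>::'a \<Rightarrow> real).
          (\<forall>x y. dist (R x) (R y) = dist x y) \<and> surj R \<and>
          norm e = 1 \<and> c \<bullet> e = 0 \<and> 0 < r \<and>
          (\<forall>z1\<in>hyperball e c r. \<forall>z2\<in>hyperball e c r.
              \<bar>\<eta> z1 - \<eta> z2\<bar> \<le> w (norm (z1 - z2))) \<and>
          R ` (E \<inter> U) = R ` U \<inter> subgraph_dir e (hyperball e c r) \<eta>))"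

end

theory Submission
  imports Defs
begin

lemma translate_trick:
  fixes W :: "'a::euclidean_space set" and b :: 'a
  assumes W: "W \<in> sets lborel" and Wb: "W \<subseteq> cball 0 Rb" and nb: "norm b \<le> 1"
    and disj: "\<And>x j k. j < k \<Longrightarrow> x + real j *\<^sub>R b \<in> W \<Longrightarrow> x + real k *\<^sub>R b \<in> W \<Longrightarrow> False"
  shows "emeasure lborel W \<le> ennreal (2 * measure lborel (cball (0::'a) (Rb+1)) * norm b)"
proof (cases "b = 0")
  case True
  have "W = {}"
  proof safe
    fix x assume "x \<in> W" thus "x \<in> {}" using disj[of 0 1 x] True by simp
  qed
  thus ?thesis by simp
next
  case False
  hence bpos: "norm b > 0" by simp
  define mc where "mc = measure lborel (cball (0::'a) (Rb+1))"
  have cfin: "emeasure lborel (cball (0::'a) (Rb+1)) < \<infinity>"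
    by (metis bounded_cball emeasure_bounded_finite less_top)
  have Wfin: "emeasure lborel W < \<infinity>"
  proof -
    have "emeasure lborel W \<le> emeasure lborel (cball (0::'a) Rb)"
      using Wb by (intro emeasure_mono) auto
    also have "\<dots> < \<infinity>" using emeasure_bounded_finite[OF bounded_cball, of 0 Rb] by (simp add: less_top)
    finally show ?thesis .
  qed
  define n where "n = nat \<lfloor>1 / norm b\<rfloor>"
  have ge1: "1 / norm b \<ge> 1" using nb bpos by simp
  have n1: "n \<ge> 1" using ge1 unfolding n_def by linarith
  have nle: "real n \<le> 1 / norm b" unfolding n_def using ge1 by linarith
  have ngt: "real n > 1 / norm b - 1" unfolding n_def using ge1 by linarith
  have key: "1 \<le> 2 * norm b * real n"
  proof (cases "1 / norm b \<ge> 2")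
    case True
    have "real n \<ge> 1 / (2 * norm b)" using ngt True by (simp add: field_simps)
    thus ?thesis using bpos by (simp add: field_simps)
  next
    case False
    hence "2 * norm b > 1" using bpos by (simp add: field_simps)
    thus ?thesis using n1 by (smt (verit) mult_le_cancel_left1 of_nat_1 of_nat_mono)
  qed
  define T where "T j = {x. x + real j *\<^sub>R b \<in> W}" for j :: nat
  have Tm: "T j \<in> sets lborel" for j
  proof -
    have "T j = (\<lambda>x. x + real j *\<^sub>R b) -` W \<inter> space lborel" unfolding T_def by auto
    moreover have "(\<lambda>x. x + real j *\<^sub>R b) \<in> lborel \<rightarrow>\<^sub>M lborel" by simp
    ultimately show ?thesis using W by (metis measurable_sets)
  qed
  have Tmeas: "emeasure lborel (T j) = emeasure lborel W" for j
  proof -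
    have "emeasure lborel W = emeasure (distr lborel borel ((+) (real j *\<^sub>R b))) W"
      by (simp add: lborel_distr_plus)
    also have "\<dots> = emeasure lborel ((+) (real j *\<^sub>R b) -` W \<inter> space lborel)"
      using W by (intro emeasure_distr) auto
    also have "(+) (real j *\<^sub>R b) -` W \<inter> space lborel = T j" unfolding T_def by (auto simp: add.commute)
    finally show ?thesis ..
  qed
  have dj: "disjoint_family_on T {..<n}"
    unfolding disjoint_family_on_def
  proof (intro ballI impI)
    fix i j assume "i \<in> {..<n}" "j \<in> {..<n}" "i \<noteq> j"
    show "T i \<inter> T j = {}"
    proof (rule ccontr)
      assume "T i \<inter> T j \<noteq> {}"
      then obtain x where "x \<in> T i" "x \<in> T j" by auto
      thus False using disj[of i j x] disj[of j i x] \<open>i \<noteq> j\<close> unfolding T_def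
        by (cases "i < j") auto
    qed
  qed
  have sub: "(\<Union>j\<in>{..<n}. T j) \<subseteq> cball 0 (Rb + 1)"
  proof (rule subsetI, elim UN_E)
    fix j x assume j: "j \<in> {..<n}" and x: "x \<in> T j"
    hence "norm (x + real j *\<^sub>R b) \<le> Rb" using Wb unfolding T_def by auto
    moreover have "norm (real j *\<^sub>R b) \<le> 1"
    proof -
      have "norm (real j *\<^sub>R b) = real j * norm b" by simp
      also have "\<dots> \<le> real n * norm b" using j bpos by (simp add: mult_right_mono)
      also have "\<dots> \<le> 1" using nle bpos by (simp add: field_simps)
      finally show ?thesis .
    qed
    ultimately have "norm x \<le> Rb + 1" by (smt (verit) norm_triangle_ineq4 add_diff_cancel)
    thus "x \<in> cball 0 (Rb + 1)" by simp
  qed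
  have "(\<Sum>j\<in>{..<n}. emeasure lborel (T j)) = emeasure lborel (\<Union>j\<in>{..<n}. T j)"
    using dj Tm by (intro sum_emeasure) auto
  also have "\<dots> \<le> emeasure lborel (cball (0::'a) (Rb+1))" using sub by (intro emeasure_mono) auto
  finally have "of_nat n * emeasure lborel W \<le> emeasure lborel (cball (0::'a) (Rb+1))"
    by (simp add: Tmeas)
  hence "ennreal (real n * measure lborel W) \<le> ennreal mc"
    using Wfin cfin unfolding mc_def
    by (simp add: emeasure_eq_ennreal_measure less_top ennreal_mult' ennreal_of_nat_eq_real_of_nat)
  hence r: "real n * measure lborel W \<le> mc" 
    by (subst (asm) ennreal_le_iff) (auto simp: mc_def)
  have "measure lborel W \<le> 2 * mc * norm b"
  proof -
    have "measure lborel W = measure lborel W * 1" by simp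
    also have "\<dots> \<le> measure lborel W * (2 * norm b * real n)" using key
      by (intro mult_left_mono) auto
    also have "\<dots> = 2 * norm b * (real n * measure lborel W)" by simp
    also have "\<dots> \<le> 2 * norm b * mc" using r bpos by (intro mult_left_mono) auto
    finally show ?thesis by (simp add: mult_ac)
  qed
  thus ?thesis using Wfin unfolding mc_def
    by (simp add: emeasure_eq_ennreal_measure less_top)
qed

lemma trick2:
  fixes W :: "'a::euclidean_space set" and b :: 'a
  assumes W: "W \<in> sets lborel" and Wb: "W \<subseteq> cball 0 Rb"
    and disj: "\<And>x j k. j < k \<Longrightarrow> x + real j *\<^sub>R b \<in> W \<Longrightarrow> x + real k *\<^sub>R b \<in> W \<Longrightarrow> False"
  shows "emeasure lborel W \<le> ennreal ((2 * measure lborel (cball (0::'a) (Rb+1)) + measure lborel (cball (0::'a) Rb)) * norm b)"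
proof (cases "norm b \<le> 1")
  case True
  have "emeasure lborel W \<le> ennreal (2 * measure lborel (cball (0::'a) (Rb+1)) * norm b)"
    by (rule translate_trick[OF W Wb True disj])
  also have "\<dots> \<le> ennreal ((2 * measure lborel (cball (0::'a) (Rb+1)) + measure lborel (cball (0::'a) Rb)) * norm b)"
    by (intro ennreal_leI mult_right_mono) auto
  finally show ?thesis .
next
  case False
  have "emeasure lborel W \<le> emeasure lborel (cball (0::'a) Rb)"
    using Wb by (intro emeasure_mono) auto
  also have "\<dots> = ennreal (measure lborel (cball (0::'a) Rb))"
    using emeasure_bounded_finite[OF bounded_cball, of 0 Rb]
    by (intro emeasure_eq_ennreal_measure) (simp add: less_top)
  also have "\<dots> \<le> ennreal ((2 * measure lborel (cball (0::'a) (Rb+1)) + measure lborel (cball (0::'a) Rb)) * norm b)"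
  proof (intro ennreal_leI)
    have "measure lborel (cball (0::'a) Rb) \<le> measure lborel (cball (0::'a) Rb) * norm b"
      using False by (intro mult_le_cancel_left1[THEN iffD2]) auto
    also have "\<dots> \<le> (2 * measure lborel (cball (0::'a) (Rb+1)) + measure lborel (cball (0::'a) Rb)) * norm b"
      by (intro mult_right_mono) auto
    finally show "measure lborel (cball (0::'a) Rb) \<le> (2 * measure lborel (cball (0::'a) (Rb+1)) + measure lborel (cball (0::'a) Rb)) * norm b" .
  qed
  finally show ?thesis .
qed

lemma isometry_facts:
  fixes R :: "'a::euclidean_space \<Rightarrow> 'a"
  assumes iso: "\<forall>x y. dist (R x) (R y) = dist x y" and surj: "surj R"
  defines "Q \<equiv> \<lambda>x. R x - R 0"
  shows "linear Q" "\<And>x. norm (Q x) = norm x" "\<And>x y. R (x + y) = R x + Q y"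
    "\<And>y. \<exists>x. Q x = y" "inj R" "continuous_on UNIV R"
proof -
  have Q0: "Q 0 = 0" unfolding Q_def by simp
  have Qd: "\<forall>x y. dist (Q x) (Q y) = dist x y" unfolding Q_def using iso by (simp add: dist_norm)
  show lin: "linear Q" by (rule isometry_linear[OF Q0 Qd])
  show nQ: "norm (Q x) = norm x" for x using Qd[rule_format, of x 0] Q0 by simp
  show "R (x + y) = R x + Q y" for x y
  proof -
    have "Q (x + y) = Q x + Q y" using lin by (simp add: linear_add)
    thus ?thesis unfolding Q_def by (simp add: algebra_simps)
  qed
  show "\<exists>x. Q x = y" for y
  proof -
    obtain x where "R x = y + R 0" using surj by (metis surjD)
    hence "Q x = y" unfolding Q_def by simp
    thus ?thesis by blast
  qed
  show "inj R" unfolding inj_on_def using iso by (metis dist_eq_0_iff)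
  show "continuous_on UNIV R"
    unfolding continuous_on_iff using iso by (metis)
qed

lemma chart_est:
  fixes R :: "'a::euclidean_space \<Rightarrow> 'a" and e c :: 'a and r :: real and \<eta> :: "'a \<Rightarrow> real"
    and E U :: "'a set" and z :: 'a and w :: "real \<Rightarrow> real"
  assumes iso: "\<forall>x y. dist (R x) (R y) = dist x y" and surj: "surj R"
    and ne: "norm e = 1"
    and modu: "\<forall>z1\<in>hyperball e c r. \<forall>z2\<in>hyperball e c r. \<bar>\<eta> z1 - \<eta> z2\<bar> \<le> w (norm (z1 - z2))"
    and graph: "R ` (E \<inter> U) = R ` U \<inter> subgraph_dir e (hyperball e c r) \<eta>"
    and Eb: "E \<subseteq> cball 0 Rb" and U: "open U" and Eo: "open E"
    and w_mono: "mono_on {0..} w" and w_nonneg: "\<And>s. s \<ge> 0 \<Longrightarrow> w s \<ge> 0"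
  shows "emeasure lborel {x. x \<in> E \<and> x \<in> U \<and> x - z \<in> U \<and> x - z \<notin> E}
    \<le> ennreal (2 * ((2 * measure lborel (cball (0::'a) (Rb+1)) + measure lborel (cball (0::'a) Rb)) * (norm z + w (norm z))))"
proof -
  define C0 where "C0 = 2 * measure lborel (cball (0::'a) (Rb+1)) + measure lborel (cball (0::'a) Rb)"
  have C0: "C0 \<ge> 0" unfolding C0_def by auto
  define Q where "Q = (\<lambda>x. R x - R 0)"
  note QF = isometry_facts[OF iso surj]
  have Qlin: "linear Q" and nQ: "\<And>x. norm (Q x) = norm x" and Radd: "\<And>x y. R (x + y) = R x + Q y"
    and Qsurj: "\<And>y. \<exists>x. Q x = y" and Rinj: "inj R" and Rcont: "continuous_on UNIV R"
    using QF unfolding Q_def by auto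
  have Rsc: "R (x + real j *\<^sub>R b) = R x + real j *\<^sub>R Q b" for x b j
    using Radd Qlin by (simp add: linear_scale)
  have Rmz: "R (x - z) = R x - Q z" for x
    using Radd[of x "-z"] Qlin by (simp add: linear_neg)
  define P where "P = (\<lambda>y::'a. y - (y \<bullet> e) *\<^sub>R e)"
  have ee: "e \<bullet> e = 1" using ne by (simp add: norm_eq_1)
  have Pe: "P y \<bullet> e = 0" for y unfolding P_def by (simp add: inner_diff_left ee)
  have Pdiff: "P (a - b) = P a - P b" for a b unfolding P_def by (simp add: inner_diff_left algebra_simps)
  have Padd: "P (a + b) = P a + P b" for a b unfolding P_def by (simp add: inner_add_left algebra_simps)
  have Psc: "P (t *\<^sub>R a) = t *\<^sub>R P a" for t a unfolding P_def by (simp add: algebra_simps)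
  have PP: "P (P a) = P a" for a using Pe[of a] unfolding P_def by simp
  have Pe0: "P (t *\<^sub>R e) = 0" for t unfolding P_def by (simp add: ee)
  have Pe1: "P e = 0" using Pe0[of 1] by simp
  have nP: "norm (P a) \<le> norm a" for a
  proof -
    have "(norm (P a))\<^sup>2 = (norm a)\<^sup>2 - (a \<bullet> e)\<^sup>2" unfolding P_def power2_norm_eq_inner
      by (simp add: inner_diff_left inner_diff_right ee inner_commute algebra_simps power2_eq_square)
    hence "(norm (P a))\<^sup>2 \<le> (norm a)\<^sup>2" by simp
    thus ?thesis by (rule power2_le_imp_le) simp
  qed
  have hyp: "y \<in> hyperball e c r \<longleftrightarrow> y \<bullet> e = 0 \<and> y \<in> ball c r" for y unfolding hyperball_def by auto
  have sub_iff: "y \<in> subgraph_dir e (hyperball e c r) \<eta> \<longleftrightarrow> P y \<in> ball c r \<and> y \<bullet> e < \<eta> (P y)" for y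
    using Pe[of y] unfolding subgraph_dir_def hyp P_def by auto
  have inE: "x \<in> E \<Longrightarrow> x \<in> U \<Longrightarrow> P (R x) \<in> ball c r \<and> R x \<bullet> e < \<eta> (P (R x))" for x
    using graph sub_iff by blast
  have notE: "\<not> (P (R x) \<in> ball c r \<and> R x \<bullet> e < \<eta> (P (R x)))" if "x \<in> U" "x \<notin> E" for x
  proof
    assume "P (R x) \<in> ball c r \<and> R x \<bullet> e < \<eta> (P (R x))"
    hence "R x \<in> R ` (E \<inter> U)" using graph sub_iff that by auto
    then obtain x' where "x' \<in> E" "R x' = R x" by auto
    thus False using Rinj that unfolding inj_def by auto
  qed
  define h where "h = norm z + w (norm z)"
  have h0: "h \<ge> 0" unfolding h_def using w_nonneg[of "norm z"] by simp
  define A1 where "A1 = {x. x \<in> E \<and> x \<in> U \<and> x - z \<in> U \<and> x - z \<notin> E \<and> P (R (x - z)) \<notin> ball c r}"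
  define A2 where "A2 = {x. x \<in> E \<and> x \<in> U \<and> x - z \<in> U \<and> x - z \<notin> E \<and> P (R (x - z)) \<in> ball c r}"
  have cP: "continuous_on UNIV (\<lambda>x. P (R (x - z)))"
    unfolding P_def by (intro continuous_intros continuous_on_compose2[OF Rcont]) auto
  have o1: "open {x. P (R (x - z)) \<in> ball c r}"
    using open_vimage[OF open_ball cP] by (simp add: vimage_def)
  have cz: "continuous_on UNIV (\<lambda>x::'a. x - z)" by (intro continuous_intros)
  have o2: "open {x. x - z \<in> U}" using open_vimage[OF U cz] by (simp add: vimage_def)
  have o3: "open {x. x - z \<in> E}" using open_vimage[OF Eo cz] by (simp add: vimage_def)
  have A1e: "A1 = ((E \<inter> U \<inter> {x. x - z \<in> U}) - {x. x - z \<in> E}) - {x. P (R (x - z)) \<in> ball c r}"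
    unfolding A1_def by auto
  have A2e: "A2 = ((E \<inter> U \<inter> {x. x - z \<in> U}) - {x. x - z \<in> E}) \<inter> {x. P (R (x - z)) \<in> ball c r}"
    unfolding A2_def by auto
  have A1m: "A1 \<in> sets lborel" unfolding A1e using o1 o2 o3 Eo U
    by (intro sets.Diff sets.Int) auto
  have A2m: "A2 \<in> sets lborel" unfolding A2e using o1 o2 o3 Eo U
    by (intro sets.Diff sets.Int) auto
  have eqA: "{x. x \<in> E \<and> x \<in> U \<and> x - z \<in> U \<and> x - z \<notin> E} = A1 \<union> A2"
    unfolding A1_def A2_def by auto
  have e1: "emeasure lborel A1 \<le> ennreal (C0 * h)"
  proof -
    define u where "u = P (Q z)"
    obtain b where b: "Q b = u" using Qsurj by blast
    have "emeasure lborel A1 \<le> ennreal (C0 * norm b)" unfolding C0_def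
    proof (rule trick2[OF A1m])
      show "A1 \<subseteq> cball 0 Rb" using Eb unfolding A1_def by auto
      fix x j k assume jk: "j < k" and xj: "x + real j *\<^sub>R b \<in> A1" and xk: "x + real k *\<^sub>R b \<in> A1"
      define p where "p = P (R x)"
      have Pu: "P u = u" unfolding u_def by (rule PP)
      have PR: "P (R (x + real i *\<^sub>R b)) = p + real i *\<^sub>R u" for i
        unfolding Rsc b p_def by (simp add: Padd Psc Pu)
      have PRz: "P (R (x + real i *\<^sub>R b - z)) = p + real i *\<^sub>R u - u" for i
        unfolding Rmz by (simp add: Pdiff PR u_def)
      have m1: "p + real j *\<^sub>R u \<in> ball c r" using xj inE[of "x + real j *\<^sub>R b"] PR unfolding A1_def by auto
      have m2: "p + real k *\<^sub>R u \<in> ball c r" using xk inE[of "x + real k *\<^sub>R b"] PR unfolding A1_def by auto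
      have m3: "p + real k *\<^sub>R u - u \<notin> ball c r" using xk PRz[of k] unfolding A1_def by auto
      define t where "t = (real k - 1 - real j) / (real k - real j)"
      have t: "0 \<le> t" "t \<le> 1" using jk unfolding t_def by (auto simp: field_simps)
      have "(1 - t) *\<^sub>R (p + real j *\<^sub>R u) + t *\<^sub>R (p + real k *\<^sub>R u) = p + real k *\<^sub>R u - u"
      proof -
        have kj: "real k - real j > 0" using jk by simp
        have tk: "t * (real k - real j) = real k - 1 - real j" using kj by (simp add: t_def)
        have "(1 - t) * real j + t * real k = real j + t * (real k - real j)" by (simp add: algebra_simps)
        hence "(1 - t) * real j + t * real k = real k - 1" using tk by simp
        hence "(1 - t) *\<^sub>R (p + real j *\<^sub>R u) + t *\<^sub>R (p + real k *\<^sub>R u) = p + ((1 - t) * real j + t * real k) *\<^sub>R u"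
          by (simp add: algebra_simps scaleR_add_left[symmetric] del: scaleR_add_left)
        also have "\<dots> = p + real k *\<^sub>R u - u" unfolding \<open>(1 - t) * real j + t * real k = real k - 1\<close>
          by (simp add: scaleR_diff_left)
        finally show ?thesis .
      qed
      moreover have "(1 - t) *\<^sub>R (p + real j *\<^sub>R u) + t *\<^sub>R (p + real k *\<^sub>R u) \<in> ball c r"
        using convex_ball[of c r] m1 m2 t unfolding convex_def by auto
      ultimately show False using m3 by simp
    qed
    also have "\<dots> \<le> ennreal (C0 * h)"
    proof (intro ennreal_leI mult_left_mono C0)
      have "norm b = norm u" using nQ b by metis
      also have "\<dots> \<le> norm (Q z)" unfolding u_def by (rule nP)
      also have "\<dots> = norm z" by (rule nQ)
      finally show "norm b \<le> h" unfolding h_def using w_nonneg[of "norm z"] by simp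
    qed
    finally show ?thesis .
  qed
  have e2: "emeasure lborel A2 \<le> ennreal (C0 * h)"
  proof -
    obtain b where b: "Q b = h *\<^sub>R e" using Qsurj by blast
    have "emeasure lborel A2 \<le> ennreal (C0 * norm b)" unfolding C0_def
    proof (rule trick2[OF A2m])
      show "A2 \<subseteq> cball 0 Rb" using Eb unfolding A2_def by auto
      fix x j k assume jk: "j < k" and xj: "x + real j *\<^sub>R b \<in> A2" and xk: "x + real k *\<^sub>R b \<in> A2"
      define p where "p = P (R x)"
      have PR: "P (R (x + real i *\<^sub>R b)) = p" for i
        unfolding Rsc b p_def by (simp add: Padd Psc Pe1)
      have eR: "R (x + real i *\<^sub>R b) \<bullet> e = R x \<bullet> e + real i * h" for i
        unfolding Rsc b by (simp add: inner_add_left ee)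
      have k1: "R x \<bullet> e + real k * h < \<eta> p"
        using xk inE[of "x + real k *\<^sub>R b"] PR eR unfolding A2_def by auto
      have jp: "p \<in> ball c r" using xj inE[of "x + real j *\<^sub>R b"] PR unfolding A2_def by auto
      define v where "v = Q z"
      define y where "y = R (x + real j *\<^sub>R b)"
      have Ry: "R (x + real j *\<^sub>R b - z) = y - v" unfolding y_def v_def by (rule Rmz)
      have qb: "P (y - v) \<in> ball c r" using xj Ry unfolding A2_def by auto
      have ne2: "\<not> (P (y - v) \<in> ball c r \<and> (y - v) \<bullet> e < \<eta> (P (y - v)))"
        using notE[of "x + real j *\<^sub>R b - z"] xj Ry unfolding A2_def by auto
      hence ge: "(y - v) \<bullet> e \<ge> \<eta> (P (y - v))" using qb by auto
      have Py: "P y = p" unfolding y_def by (rule PR)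
      have hp: "p \<in> hyperball e c r" using jp Pe[of "R x"] unfolding hyperball_def p_def by auto
      have hq: "P (y - v) \<in> hyperball e c r" using qb Pe[of "y - v"] unfolding hyperball_def by auto
      have "\<bar>\<eta> p - \<eta> (P (y - v))\<bar> \<le> w (norm (p - P (y - v)))" using modu hp hq by blast
      also have "p - P (y - v) = P v" using Py by (simp add: Pdiff)
      also have "w (norm (P v)) \<le> w (norm z)"
      proof -
        have "norm (P v) \<le> norm z" using nP[of v] nQ[of z] unfolding v_def by simp
        thus ?thesis using w_mono unfolding mono_on_def by auto
      qed
      finally have mod1: "\<eta> p - w (norm z) \<le> \<eta> (P (y - v))" by linarith
      have "- norm z \<le> v \<bullet> e"
      proof -
        have "\<bar>v \<bullet> e\<bar> \<le> norm v * norm e" by (rule Cauchy_Schwarz_ineq2)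
        thus ?thesis using ne nQ[of z] unfolding v_def by simp
      qed
      moreover have "(y - v) \<bullet> e = y \<bullet> e - v \<bullet> e" by (simp add: inner_diff_left)
      ultimately have "y \<bullet> e \<ge> \<eta> p - h" using ge mod1 unfolding h_def by linarith
      hence "R x \<bullet> e + real j * h \<ge> \<eta> p - h" unfolding y_def eR .
      moreover have "real k * h \<ge> (real j + 1) * h" using jk h0 by (intro mult_right_mono) auto
      ultimately show False using k1 by (simp add: algebra_simps)
    qed
    also have "norm b = h" using nQ[of b] b ne h0 by simp
    finally show ?thesis .
  qed
  have "emeasure lborel {x. x \<in> E \<and> x \<in> U \<and> x - z \<in> U \<and> x - z \<notin> E} \<le> emeasure lborel A1 + emeasure lborel A2"
    unfolding eqA using A1m A2m by (intro emeasure_subadditive) auto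
  also have "\<dots> \<le> ennreal (C0 * h) + ennreal (C0 * h)" using e1 e2 by (rule add_mono)
  also have "\<dots> = ennreal (2 * (C0 * h))" using C0 h0 by (simp add: ennreal_plus[symmetric] del: ennreal_plus)
  finally show ?thesis unfolding C0_def h_def .
qed

lemma ball_minus_ennreal:
  fixes a d :: real
  assumes "0 \<le> a" "a < d"
  shows "emeasure lborel (ball (0::'a::euclidean_space) d \<inter> {z. a < norm z})
     = ennreal (unit_ball_vol DIM('a) * (d ^ DIM('a) - a ^ DIM('a)))"
proof -
  have eq: "ball (0::'a) d \<inter> {z. a < norm z} = ball 0 d - cball 0 a" by auto
  have "emeasure lborel (ball (0::'a) d - cball 0 a) = emeasure lborel (ball (0::'a) d) - emeasure lborel (cball (0::'a) a)"
    using assms by (intro emeasure_Diff) (auto simp: emeasure_cball)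
  also have "\<dots> = ennreal (unit_ball_vol DIM('a) * d ^ DIM('a)) - ennreal (unit_ball_vol DIM('a) * a ^ DIM('a))"
    using assms by (simp add: emeasure_cball emeasure_ball)
  also have "\<dots> = ennreal (unit_ball_vol DIM('a) * (d ^ DIM('a) - a ^ DIM('a)))"
    using assms by (subst ennreal_minus) (auto simp: algebra_simps)
  finally show ?thesis using eq by simp
qed

lemma interval_FTC_pow:
  fixes a d :: real
  assumes "0 \<le> a" "a < d"
  shows "(\<integral>\<^sup>+s. indicator {a<..<d} s * ennreal (real DIM('a::euclidean_space) * unit_ball_vol DIM('a) * s ^ (DIM('a) - 1)) \<partial>lborel)
     = ennreal (unit_ball_vol DIM('a) * (d ^ DIM('a) - a ^ DIM('a)))"
proof -
  let ?N = "DIM('a)" let ?w = "unit_ball_vol DIM('a)"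
  have "(\<integral>\<^sup>+s. indicator {a<..<d} s * ennreal (real ?N * ?w * s ^ (?N - 1)) \<partial>lborel)
      = (\<integral>\<^sup>+s. ennreal (real ?N * ?w * s ^ (?N - 1)) * indicator {a..d} s \<partial>lborel)"
  proof (intro nn_integral_cong_AE)
    show "AE s in lborel. indicator {a<..<d} s * ennreal (real ?N * ?w * s ^ (?N - 1)) =
       ennreal (real ?N * ?w * s ^ (?N - 1)) * indicator {a..d} s"
      using AE_lborel_singleton[of a] AE_lborel_singleton[of d]
      by eventually_elim (auto simp: indicator_def)
  qed
  also have "\<dots> = ennreal (?w * d ^ ?N - ?w * a ^ ?N)"
  proof (rule nn_integral_FTC_Icc[where F="\<lambda>s. ?w * s ^ ?N"])
    show "(\<lambda>s. real ?N * ?w * s ^ (?N - 1)) \<in> borel_measurable borel" by simp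
    fix x assume x: "x \<in> {a..d}"
    show "0 \<le> real ?N * ?w * x ^ (?N - 1)" using x assms by simp
    show "((\<lambda>s. ?w * s ^ ?N) has_real_derivative real ?N * ?w * x ^ (?N - 1)) (at x)"
      by (auto intro!: derivative_eq_intros)
  qed (use assms in auto)
  finally show ?thesis by (simp add: algebra_simps)
qed

lemma radial_integral:
  fixes f :: "real \<Rightarrow> ennreal" and d :: real
  assumes f[measurable]: "f \<in> borel_measurable borel" and d: "d > 0"
  shows "(\<integral>\<^sup>+z. indicator (ball (0::'a::euclidean_space) d) z * f (norm z) \<partial>lborel)
    = (\<integral>\<^sup>+s. indicator {0<..<d} s * ennreal (real DIM('a) * unit_ball_vol DIM('a) * s ^ (DIM('a) - 1)) * f s \<partial>lborel)"
proof -
  let ?N = "DIM('a)" let ?w = "unit_ball_vol DIM('a)"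
  define g where "g s = indicator {0<..<d} s * ennreal (real ?N * ?w * s ^ (?N - 1))" for s :: real
  have g[measurable]: "g \<in> borel_measurable borel" unfolding g_def by simp
  define M where "M = distr (density lborel (indicator (ball (0::'a) d))) borel norm"
  have "M = density lborel g"
  proof (rule measure_eqI_lessThan)
    show "sets M = sets borel" "sets (density lborel g) = sets borel" unfolding M_def by auto
    have em: "emeasure M {x<..} = emeasure lborel (ball (0::'a) d \<inter> {z. x < norm z})" for x
    proof -
      have "emeasure M {x<..} = emeasure (density lborel (indicator (ball (0::'a) d))) (norm -` {x<..} \<inter> space (density lborel (indicator (ball (0::'a) d))))"
        unfolding M_def by (intro emeasure_distr) auto
      also have "\<dots> = emeasure lborel (ball (0::'a) d \<inter> (norm -` {x<..}))"
      proof -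
        have "norm -` {x<..} = {z::'a. x < norm z}" by auto
        moreover have "{z::'a. x < norm z} \<in> sets borel" by measurable
        ultimately show ?thesis by (subst emeasure_restricted) auto
      qed
      finally show ?thesis by (simp add: vimage_def)
    qed
    show "emeasure M {x<..} < \<infinity>" for x
    proof -
      have "emeasure lborel (ball (0::'a) d \<inter> {z. x < norm z}) \<le> emeasure lborel (ball (0::'a) d)"
        by (intro emeasure_mono) auto
      also have "\<dots> < \<infinity>" by (rule emeasure_lborel_ball_finite)
      finally show ?thesis using em by simp
    qed
    fix x :: real
    have eg: "emeasure (density lborel g) {x<..} = (\<integral>\<^sup>+s. indicator {max x 0<..<d} s * ennreal (real ?N * ?w * s ^ (?N - 1)) \<partial>lborel)"
      by (subst emeasure_density) (auto intro!: nn_integral_cong simp: g_def indicator_def)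
    show "emeasure M {x<..} = emeasure (density lborel g) {x<..}"
    proof (cases "x < 0")
      case True
      have "ball (0::'a) d \<inter> {z. x < norm z} = ball (0::'a) d"
        using True by auto (smt (verit) norm_ge_zero)
      moreover have "max x 0 = 0" using True by simp
      ultimately show ?thesis unfolding em eg
        using interval_FTC_pow[of 0 d, where 'a='a] d
        by (simp add: emeasure_ball)
    next
      case x0: False
      show ?thesis
      proof (cases "x < d")
      case True
      have "max x 0 = x" using x0 by simp
      thus ?thesis unfolding em eg
        using ball_minus_ennreal[of x d, where 'a='a] interval_FTC_pow[of x d, where 'a='a] True x0
        by simp
    next
      case False
      hence "ball (0::'a) d \<inter> {z. x < norm z} = {}" by auto
      moreover have "{max x 0<..<d} = {}" using False by auto
      ultimately show ?thesis unfolding em eg by simp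
    qed
    qed
  qed
  have "(\<integral>\<^sup>+z. indicator (ball (0::'a) d) z * f (norm z) \<partial>lborel)
      = (\<integral>\<^sup>+z. f (norm z) \<partial>density lborel (indicator (ball (0::'a) d)))"
    by (subst nn_integral_density) (auto intro!: borel_measurable_indicator)
  also have "\<dots> = (\<integral>\<^sup>+s. f s \<partial>M)" unfolding M_def
    by (subst nn_integral_distr) auto
  also have "\<dots> = (\<integral>\<^sup>+s. g s * f s \<partial>lborel)" unfolding \<open>M = density lborel g\<close>
    by (subst nn_integral_density) auto
  finally show ?thesis unfolding g_def .
qed

lemma slowvar_int:
  fixes l :: "real \<Rightarrow> real" and \<rho> :: real
  assumes rho_pos: "\<rho> > 0"
    and ell_pos: "\<And>s. 0 < s \<Longrightarrow> s < \<rho> \<Longrightarrow> l s > 0"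
    and ell_bdd: "\<And>\<epsilon>. 0 < \<epsilon> \<Longrightarrow> \<epsilon> < \<rho> \<Longrightarrow>
        \<exists>c C. 0 < c \<and> 0 < C \<and> (\<forall>s\<in>{\<epsilon>..<\<rho>}. c \<le> l s \<and> l s \<le> C)"
    and H2: "((\<lambda>s. l ((1/2) * s) / l s) \<longlongrightarrow> 1) (at_right 0)"
  shows "\<exists>s0>0. s0 < \<rho> \<and> (\<integral>\<^sup>+ s. indicator {0<..s0} s * ennreal (l s) \<partial>lborel) < \<infinity>"
proof -
  have "eventually (\<lambda>s. l ((1/2) * s) / l s < 3/2) (at_right 0)"
    using H2 by (rule order_tendstoD) simp
  then obtain b where b: "b > 0" and bP: "\<And>s. 0 < s \<Longrightarrow> s < b \<Longrightarrow> l ((1/2) * s) / l s < 3/2"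
    unfolding eventually_at_right_field by auto
  define s0 where "s0 = min (b/2) (\<rho>/2)"
  have s0: "0 < s0" "s0 < \<rho>" "s0 < b" using b rho_pos unfolding s0_def by auto
  obtain c C where C: "0 < C" "\<And>s. s \<in> {s0/2..<\<rho>} \<Longrightarrow> l s \<le> C"
    using ell_bdd[of "s0/2"] s0 by auto
  have claim: "\<And>s. s0 / 2^(k+1) < s \<Longrightarrow> s \<le> s0 / 2^k \<Longrightarrow> l s \<le> C * (3/2)^k" for k :: nat
  proof (induction k)
    case 0
    thus ?case using C s0 by auto
  next
    case (Suc k)
    fix s assume a1: "s0 / 2^(Suc k+1) < s" and a2: "s \<le> s0 / 2^(Suc k)"
    have "s0 / 2^(k+1) < 2 * s" "2 * s \<le> s0 / 2^k" using a1 a2 by (auto simp: field_simps)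
    hence l2: "l (2 * s) \<le> C * (3/2)^k" using Suc.IH by blast
    have "s0 / 2^(Suc k+1) > 0" using s0 by simp
    hence spos: "s > 0" using a1 by linarith
    have "(1::real) \<le> 2^k" by simp
    hence "s0 * 1 \<le> s0 * 2^k" using s0 by (intro mult_left_mono) auto
    hence "s0 / 2^k \<le> s0" by (simp add: divide_le_eq)
    hence "2 * s \<le> s0" using \<open>2 * s \<le> s0 / 2^k\<close> by linarith
    hence lpos: "l (2 * s) > 0" using spos s0 by (intro ell_pos) auto
    have "l ((1/2) * (2 * s)) / l (2 * s) < 3/2" using spos \<open>2 * s \<le> s0\<close> s0 by (intro bP) auto
    hence "l s < 3/2 * l (2 * s)" using lpos by (simp add: divide_less_eq)
    also have "\<dots> \<le> 3/2 * (C * (3/2)^k)" using l2 by simp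
    finally show "l s \<le> C * (3/2)^(Suc k)" by simp
  qed
  define I where "I k = {s0 / 2^(k+1) <.. s0 / 2^k}" for k :: nat
  define F where "F k s = indicator (I k) s * ennreal (C * (3/2)^k)" for k :: nat and s :: real
  have pt: "indicator {0<..s0} s * ennreal (l s) \<le> (\<Sum>k. F k s)" for s
  proof (cases "s \<in> {0<..s0}")
    case False thus ?thesis by simp
  next
    case True
    hence sp: "0 < s" "s \<le> s0" by auto
    obtain n where n: "s0 / s < 2^n" using real_arch_pow[of 2 "s0/s"] by auto
    hence "\<exists>n. s0 < s * 2^n" using sp by (auto simp: field_simps)
    then obtain m where m: "s0 < s * 2^m" "\<And>j. j < m \<Longrightarrow> \<not> s0 < s * 2^j"
      using exists_least_iff[of "\<lambda>n. s0 < s * 2^n"] by blast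
    have "m \<noteq> 0" using m sp by (metis linorder_not_le mult.right_neutral power_0)
    then obtain k where k: "m = Suc k" by (cases m) auto
    have "s * 2^k \<le> s0" using m(2)[of k] k by simp
    hence i2: "s \<le> s0 / 2^k" by (simp add: field_simps)
    have i1: "s0 / 2^(k+1) < s" using m(1) k by (simp add: field_simps)
    have "s \<in> I k" using i1 i2 unfolding I_def by auto
    have "indicator {0<..s0} s * ennreal (l s) = ennreal (l s)" using True by simp
    also have "\<dots> \<le> ennreal (C * (3/2)^k)" using claim[OF i1 i2] by (simp add: ennreal_leI)
    also have "\<dots> = F k s" using \<open>s \<in> I k\<close> unfolding F_def by simp
    also have "\<dots> \<le> (\<Sum>j<Suc k. F j s)" by (intro member_le_sum) auto
    also have "\<dots> \<le> (\<Sum>j. F j s)" by (intro sum_le_suminf) auto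
    finally show ?thesis .
  qed
  have "(\<integral>\<^sup>+ s. indicator {0<..s0} s * ennreal (l s) \<partial>lborel) \<le> (\<integral>\<^sup>+ s. (\<Sum>k. F k s) \<partial>lborel)"
    by (intro nn_integral_mono pt)
  also have "\<dots> = (\<Sum>k. \<integral>\<^sup>+ s. F k s \<partial>lborel)"
    by (intro nn_integral_suminf) (auto simp: F_def I_def)
  also have "\<dots> = (\<Sum>k. ennreal (C * s0 / 2 * (3/4)^k))"
  proof (intro suminf_cong)
    fix k
    have "(\<integral>\<^sup>+ s. F k s \<partial>lborel) = ennreal (C * (3/2)^k) * emeasure lborel (I k)"
      unfolding F_def by (subst nn_integral_cmult_indicator[symmetric]) (auto simp: I_def mult.commute)
    also have "emeasure lborel (I k) = ennreal (s0 / 2^k - s0 / 2^(k+1))"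
      unfolding I_def using s0 by (intro emeasure_lborel_Ioc) (auto simp: field_simps)
    also have "ennreal (C * (3/2)^k) * ennreal (s0 / 2^k - s0 / 2^(k+1)) = ennreal (C * (3/2)^k * (s0 / 2^k - s0 / 2^(k+1)))"
      using C s0 by (intro ennreal_mult'[symmetric]) auto
    also have "C * (3/2)^k * (s0 / 2^k - s0 / 2^(k+1)) = C * s0 / 2 * (3/4)^k"
      by (simp add: field_simps power_divide flip: power_mult_distrib)
    finally show "(\<integral>\<^sup>+ s. F k s \<partial>lborel) = ennreal (C * s0 / 2 * (3/4)^k)" .
  qed
  also have "\<dots> < \<infinity>"
  proof -
    have "summable (\<lambda>k. C * s0 / 2 * (3/4::real)^k)" by (intro summable_mult summable_geometric) auto
    thus ?thesis using C s0 by (simp add: ennreal_suminf_neq_top less_top)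
  qed
  finally show ?thesis using s0 by auto
qed

lemma local_est:
  fixes E :: "'a::euclidean_space set" and w :: "real \<Rightarrow> real"
  assumes E_open: "open E" and E_bdd: "bounded E"
    and w_mono: "mono_on {0..} w" and w_nonneg: "\<And>s. s \<ge> 0 \<Longrightarrow> w s \<ge> 0"
    and E_mod: "boundary_modulus E w"
  shows "\<exists>\<delta>>0. \<exists>C\<ge>0. \<forall>z::'a. norm z < \<delta> \<longrightarrow>
     emeasure lborel {x\<in>E. x - z \<notin> E} \<le> ennreal (C * (norm z + w (norm z)))"
proof -
  define chart where "chart U \<longleftrightarrow> (\<exists>(R::'a \<Rightarrow> 'a) (e::'a) (c::'a) (r::real) (\<eta>::'a \<Rightarrow> real).
          (\<forall>x y. dist (R x) (R y) = dist x y) \<and> surj R \<and>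
          norm e = 1 \<and> c \<bullet> e = 0 \<and> 0 < r \<and>
          (\<forall>z1\<in>hyperball e c r. \<forall>z2\<in>hyperball e c r.
              \<bar>\<eta> z1 - \<eta> z2\<bar> \<le> w (norm (z1 - z2))) \<and>
          R ` (E \<inter> U) = R ` U \<inter> subgraph_dir e (hyperball e c r) \<eta>)" for U
  have "\<exists>\<U>. finite \<U> \<and> (\<forall>U\<in>\<U>. open U) \<and> frontier E \<subseteq> \<Union>\<U> \<and> (\<forall>U\<in>\<U>. chart U)"
    using E_mod unfolding boundary_modulus_def chart_def .
  then obtain \<U> where fin: "finite \<U>" and opn: "\<forall>U\<in>\<U>. open U" and cov: "frontier E \<subseteq> \<Union>\<U>"
    and ch: "\<forall>U\<in>\<U>. chart U" by blast
  obtain Rb where Rb: "\<forall>x\<in>E. norm x \<le> Rb" using E_bdd unfolding bounded_iff by blast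
  have Eb: "E \<subseteq> cball 0 Rb" using Rb by auto
  have "compact (frontier E)" using E_bdd by (rule compact_frontier_bounded)
  moreover have opn': "\<And>G. G \<in> \<U> \<Longrightarrow> open G" using opn by auto
  ultimately obtain \<delta> where d: "\<delta> > 0" and dU: "\<And>p. p \<in> frontier E \<Longrightarrow> \<exists>U\<in>\<U>. ball p \<delta> \<subseteq> U"
    using Heine_Borel_lemma[OF _ cov opn'] by blast
  define C1 where "C1 = 2 * ((2 * measure lborel (cball (0::'a) (Rb+1)) + measure lborel (cball (0::'a) Rb)))"
  have C1: "C1 \<ge> 0" unfolding C1_def by auto
  have "\<forall>z::'a. norm z < \<delta> \<longrightarrow>
     emeasure lborel {x\<in>E. x - z \<notin> E} \<le> ennreal (real (card \<U>) * C1 * (norm z + w (norm z)))"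
  proof (intro allI impI)
    fix z :: 'a assume z: "norm z < \<delta>"
    define h where "h = norm z + w (norm z)"
    define A where "A U = {x. x \<in> E \<and> x \<in> U \<and> x - z \<in> U \<and> x - z \<notin> E}" for U
    have cz: "continuous_on UNIV (\<lambda>x::'a. x - z)" by (intro continuous_intros)
    have Am: "A U \<in> sets lborel" if "U \<in> \<U>" for U
    proof -
      have o2: "open {x. x - z \<in> U}" using open_vimage[OF _ cz, of U] opn that by (simp add: vimage_def)
      have o3: "open {x. x - z \<in> E}" using open_vimage[OF E_open cz] by (simp add: vimage_def)
      have eqA: "A U = (E \<inter> U \<inter> {x. x - z \<in> U}) - {x. x - z \<in> E}" unfolding A_def by auto
      have "open U" using opn that by auto
      thus ?thesis unfolding eqA using o2 o3 E_open by (intro sets.Diff sets.Int) auto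
    qed
    have sub: "{x\<in>E. x - z \<notin> E} \<subseteq> (\<Union>U\<in>\<U>. A U)"
    proof
      fix x assume x: "x \<in> {x\<in>E. x - z \<notin> E}"
      have "closed_segment x (x - z) \<inter> E \<noteq> {}" using x by auto
      moreover have "closed_segment x (x - z) - E \<noteq> {}" using x by auto
      ultimately have "closed_segment x (x - z) \<inter> frontier E \<noteq> {}"
        by (intro connected_Int_frontier) auto
      then obtain p where p: "p \<in> closed_segment x (x - z)" "p \<in> frontier E" by auto
      obtain U where U: "U \<in> \<U>" "ball p \<delta> \<subseteq> U" using dU[OF p(2)] by auto
      have "dist p x \<le> dist x (x - z) \<and> dist p (x - z) \<le> dist x (x - z)"
        by (rule dist_in_closed_segment[OF p(1)])
      moreover have "dist x (x - z) = norm z" by (simp add: dist_norm)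
      ultimately have "dist p x < \<delta>" "dist p (x - z) < \<delta>" using z by linarith+
      hence "x \<in> ball p \<delta>" "x - z \<in> ball p \<delta>" by simp_all
      hence "x \<in> A U" using U x unfolding A_def by auto
      thus "x \<in> (\<Union>U\<in>\<U>. A U)" using U by auto
    qed
    have "emeasure lborel {x\<in>E. x - z \<notin> E} \<le> emeasure lborel (\<Union>U\<in>\<U>. A U)"
      using sub Am fin by (intro emeasure_mono) (auto intro: sets.finite_UN)
    also have "\<dots> \<le> (\<Sum>U\<in>\<U>. emeasure lborel (A U))"
      using fin Am by (intro emeasure_subadditive_finite) auto
    also have "\<dots> \<le> (\<Sum>U\<in>\<U>. ennreal (C1 * h))"
    proof (intro sum_mono)
      fix U assume U: "U \<in> \<U>"
      hence cU: "chart U" using ch by blast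
      have oU: "open U" using opn U by blast
      show "emeasure lborel (A U) \<le> ennreal (C1 * h)"
        using cU unfolding chart_def A_def C1_def h_def
        apply (elim exE conjE)
        apply (rule order_trans[OF chart_est[OF _ _ _ _ _ Eb oU E_open w_mono w_nonneg]])
        apply assumption+
        by (simp only: mult.assoc order_refl)
    qed
    also have "\<dots> = ennreal (real (card \<U>) * C1 * h)"
      using C1 by (simp add: ennreal_mult' ennreal_of_nat_eq_real_of_nat mult.assoc)
    finally show "emeasure lborel {x\<in>E. x - z \<notin> E} \<le> ennreal (real (card \<U>) * C1 * (norm z + w (norm z)))"
      unfolding h_def .
  qed
  moreover have "0 \<le> real (card \<U>) * C1" using C1 by simp
  ultimately show ?thesis using d by blast
qed




lemma perimeter_rewrite:
  fixes K :: "'a::euclidean_space \<Rightarrow> real" and E :: "'a set"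
  assumes K_meas: "K \<in> borel_measurable lborel" and E_open: "open E"
  shows "(\<integral>\<^sup>+ x\<in>E. (\<integral>\<^sup>+ y\<in>- E. ennreal (K (x - y)) \<partial>lborel) \<partial>lborel)
       = (\<integral>\<^sup>+ z. ennreal (K z) * emeasure lborel {x\<in>E. x - z \<notin> E} \<partial>lborel)"
proof -
  have Kb[measurable]: "K \<in> borel_measurable borel" using K_meas by simp
  have Eb[measurable]: "E \<in> sets borel" using E_open by simp
  have Dx: "distr lborel borel (\<lambda>z. x - z) = (lborel :: 'a measure)" for x :: 'a
  proof -
    have "lborel = density (distr lborel borel (\<lambda>z. x + (-1) *\<^sub>R z)) (\<lambda>_. \<bar>-1::real\<bar>^DIM('a))"
      by (rule lborel_affine) simp
    thus ?thesis by (simp add: density_1)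
  qed
  have inner: "(\<integral>\<^sup>+ y\<in>- E. ennreal (K (x - y)) \<partial>lborel) = (\<integral>\<^sup>+ z. ennreal (K z) * indicator (- E) (x - z) \<partial>lborel)" for x
  proof -
    have "(\<integral>\<^sup>+ y\<in>- E. ennreal (K (x - y)) \<partial>lborel) = (\<integral>\<^sup>+ y. ennreal (K (x - y)) * indicator (- E) y \<partial>distr lborel borel (\<lambda>z. x - z))"
      by (simp add: Dx)
    also have "\<dots> = (\<integral>\<^sup>+ z. ennreal (K (x - (x - z))) * indicator (- E) (x - z) \<partial>lborel)"
      by (subst nn_integral_distr) auto
    finally show ?thesis by simp
  qed
  have "(\<integral>\<^sup>+ x\<in>E. (\<integral>\<^sup>+ y\<in>- E. ennreal (K (x - y)) \<partial>lborel) \<partial>lborel)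
      = (\<integral>\<^sup>+ x. (\<integral>\<^sup>+ z. ennreal (K z) * indicator (- E) (x - z) * indicator E x \<partial>lborel) \<partial>lborel)"
    unfolding inner by (intro nn_integral_cong nn_integral_multc[symmetric]) auto
  also have "\<dots> = (\<integral>\<^sup>+ z. (\<integral>\<^sup>+ x. ennreal (K z) * indicator (- E) (x - z) * indicator E x \<partial>lborel) \<partial>lborel)"
    by (rule lborel_pair.Fubini'[symmetric]) measurable
  also have "\<dots> = (\<integral>\<^sup>+ z. ennreal (K z) * emeasure lborel {x\<in>E. x - z \<notin> E} \<partial>lborel)"
  proof (intro nn_integral_cong)
    fix z :: 'a
    have S: "{x\<in>E. x - z \<notin> E} \<in> sets lborel" by measurable
    have "(\<integral>\<^sup>+ x. ennreal (K z) * indicator (- E) (x - z) * indicator E x \<partial>lborel)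
        = (\<integral>\<^sup>+ x. ennreal (K z) * indicator {x\<in>E. x - z \<notin> E} x \<partial>lborel)"
      by (intro nn_integral_cong) (auto simp: indicator_def)
    also have "\<dots> = ennreal (K z) * emeasure lborel {x\<in>E. x - z \<notin> E}"
      using S by (rule nn_integral_cmult_indicator)
    finally show "(\<integral>\<^sup>+ x. ennreal (K z) * indicator (- E) (x - z) * indicator E x \<partial>lborel) = ennreal (K z) * emeasure lborel {x\<in>E. x - z \<notin> E}" .
  qed
  finally show ?thesis .
qed

theorem mainTheorem10:
  fixes K :: "'a::euclidean_space \<Rightarrow> real"
    and l :: "real \<Rightarrow> real"
    and \<rho> :: real
    and w :: "real \<Rightarrow> real"
    and E :: "'a set"
  assumes K_meas: "K \<in> borel_measurable lborel"
    and K_nonneg: "\<And>z. K z \<ge> 0"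
    and K_even: "\<And>z. K (- z) = K z"
    and H0: "(\<integral>\<^sup>+ z. ennreal (min 1 ((norm z)\<^sup>2) * K z) \<partial>lborel) < \<infinity>"
    and H0': "\<And>\<epsilon>. \<epsilon> > 0 \<Longrightarrow> \<not> set_integrable lborel (ball 0 \<epsilon>) K"
    and rho_pos: "\<rho> > 0"
    and ell_pos: "\<And>s. 0 < s \<Longrightarrow> s < \<rho> \<Longrightarrow> l s > 0"
    and ell_bdd: "\<And>\<epsilon>. 0 < \<epsilon> \<Longrightarrow> \<epsilon> < \<rho> \<Longrightarrow>
        \<exists>c C. 0 < c \<and> 0 < C \<and> (\<forall>s\<in>{\<epsilon>..<\<rho>}. c \<le> l s \<and> l s \<le> C)"
    and K_ell: "\<And>z. 0 < norm z \<Longrightarrow> norm z < \<rho> \<Longrightarrow>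
        K z = l (norm z) / norm z ^ DIM('a)"
    and H1_M: "((\<lambda>r. \<integral>\<^sup>+ s\<in>{r<..<\<rho>}. ennreal (l s / s) \<partial>lborel) \<longlongrightarrow> \<infinity>) (at_right 0)"
    and H2: "\<And>lam. lam > 0 \<Longrightarrow> ((\<lambda>s. l (lam * s) / l s) \<longlongrightarrow> 1) (at_right 0)"
    and E_open: "open E" and E_bdd: "bounded E"
    and w_cont: "continuous_on {0..} w"
    and w_mono: "mono_on {0..} w"
    and w_nonneg: "\<And>s. s \<ge> 0 \<Longrightarrow> w s \<ge> 0"
    and w_0: "w 0 = 0"
    and E_mod: "boundary_modulus E w"
    and int_fin: "(\<integral>\<^sup>+ s\<in>{0<..<\<rho>}. ennreal (w s * l s / s) \<partial>lborel) < \<infinity>"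
  shows "(\<integral>\<^sup>+ x\<in>E. (\<integral>\<^sup>+ y\<in>- E. ennreal (K (x - y)) \<partial>lborel) \<partial>lborel) < \<infinity>"
proof -
  have Kb[measurable]: "K \<in> borel_measurable borel" using K_meas by simp
  let ?N = "DIM('a)" let ?w = "unit_ball_vol (real DIM('a))"
  define \<phi> where "\<phi> z = emeasure lborel {x\<in>E. x - z \<notin> E}" for z :: 'a
  obtain \<delta> C where dC: "\<delta> > 0" "C \<ge> 0" and loc: "\<And>z::'a. norm z < \<delta> \<Longrightarrow> \<phi> z \<le> ennreal (C * (norm z + w (norm z)))"
    using local_est[OF E_open E_bdd w_mono w_nonneg E_mod] unfolding \<phi>_def by blast
  have H2h: "((\<lambda>s. l ((1/2) * s) / l s) \<longlongrightarrow> 1) (at_right 0)" using H2[of "1/2"] by simp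
  obtain s0 where s0: "s0 > 0" "s0 < \<rho>" and lint: "(\<integral>\<^sup>+ s. indicator {0<..s0} s * ennreal (l s) \<partial>lborel) < \<infinity>"
    using slowvar_int[OF rho_pos ell_pos ell_bdd H2h] by blast
  define d where "d = min \<delta> s0"
  have d: "d > 0" "d \<le> \<delta>" "d \<le> s0" "d < \<rho>" using dC s0 unfolding d_def by auto
  obtain b0 :: 'a where b0: "b0 \<in> Basis" using nonempty_Basis by blast
  have nb0: "norm b0 = 1" using b0 by simp
  define lm where "lm s = K (s *\<^sub>R b0) * s ^ ?N" for s
  have lm_eq: "lm s = l s" if "0 < s" "s < \<rho>" for s
  proof -
    have "norm (s *\<^sub>R b0) = s" using that nb0 by simp
    hence "K (s *\<^sub>R b0) = l s / s ^ ?N" using K_ell[of "s *\<^sub>R b0"] that by simp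
    thus ?thesis unfolding lm_def using that by simp
  qed
  have lm_meas[measurable]: "lm \<in> borel_measurable borel" unfolding lm_def by measurable
  define wm where "wm s = indicator {0::real..} s *\<^sub>R w s" for s
  have wm_meas[measurable]: "wm \<in> borel_measurable borel" unfolding wm_def
    by (rule borel_measurable_continuous_on_indicator) (auto intro: w_cont)
  have wm_eq: "s \<ge> 0 \<Longrightarrow> wm s = w s" for s unfolding wm_def by simp
  define G where "G s = lm s / s ^ ?N * (s + wm s)" for s
  have G_meas[measurable]: "G \<in> borel_measurable borel" unfolding G_def by measurable
  have Efin: "emeasure lborel E < \<infinity>" using emeasure_bounded_finite[OF E_bdd] by (simp add: less_top)
  define m where "m = min 1 (d\<^sup>2)"
  have m: "m > 0" "m \<le> 1" using d unfolding m_def by auto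
  have Npos: "?N > 0" by simp
  have pt: "ennreal (K z) * \<phi> z \<le> ennreal C * (indicator (ball 0 d) z * ennreal (G (norm z)))
      + (emeasure lborel E * ennreal (1/m)) * ennreal (min 1 ((norm z)\<^sup>2) * K z)" for z :: 'a
  proof (cases "z \<in> ball 0 d")
    case True
    hence nz: "norm z < d" by simp
    define h where "h = norm z + w (norm z)"
    have h0: "h \<ge> 0" unfolding h_def using w_nonneg[of "norm z"] by simp
    have KG: "K z * h = G (norm z)"
    proof (cases "z = 0")
      case True
      thus ?thesis unfolding h_def G_def using w_0 Npos by simp
    next
      case False
      hence p: "0 < norm z" "norm z < \<rho>" using nz d by auto
      have "K z = lm (norm z) / norm z ^ ?N" using K_ell[OF p] lm_eq[OF p] by simp
      thus ?thesis unfolding h_def G_def using wm_eq[of "norm z"] by simp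
    qed
    have "ennreal (K z) * \<phi> z \<le> ennreal (K z) * ennreal (C * h)"
      using loc[of z] nz d unfolding h_def by (intro mult_left_mono) auto
    also have "\<dots> = ennreal C * ennreal (K z * h)"
      using K_nonneg[of z] dC h0 by (simp add: ennreal_mult[symmetric] mult_ac)
    also have "\<dots> = ennreal C * (indicator (ball 0 d) z * ennreal (G (norm z)))"
      using True KG by simp
    finally show ?thesis by (rule order_trans) simp
  next
    case False
    hence nz: "norm z \<ge> d" by simp
    have "d\<^sup>2 \<le> (norm z)\<^sup>2" using nz d by (intro power_mono) auto
    hence "m \<le> min 1 ((norm z)\<^sup>2)" unfolding m_def by auto
    hence "m * K z \<le> min 1 ((norm z)\<^sup>2) * K z" using K_nonneg[of z] by (rule mult_right_mono)
    hence "K z \<le> (1/m) * (min 1 ((norm z)\<^sup>2) * K z)"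
      using m by (simp add: field_simps)
    hence "ennreal (K z) \<le> ennreal ((1/m) * (min 1 ((norm z)\<^sup>2) * K z))" by (rule ennreal_leI)
    also have "\<dots> = ennreal (1/m) * ennreal (min 1 ((norm z)\<^sup>2) * K z)"
      using m K_nonneg[of z] by (intro ennreal_mult) auto
    finally have Kle: "ennreal (K z) \<le> ennreal (1/m) * ennreal (min 1 ((norm z)\<^sup>2) * K z)" .
    have "\<phi> z \<le> emeasure lborel E" unfolding \<phi>_def using E_open by (intro emeasure_mono) auto
    hence "ennreal (K z) * \<phi> z \<le> ennreal (1/m) * ennreal (min 1 ((norm z)\<^sup>2) * K z) * emeasure lborel E"
      using Kle by (metis mult_mono zero_le)
    also have "\<dots> = (emeasure lborel E * ennreal (1/m)) * ennreal (min 1 ((norm z)\<^sup>2) * K z)"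
      by (simp add: mult_ac)
    finally show ?thesis by (rule order_trans) simp
  qed
  have I1: "(\<integral>\<^sup>+ z. indicator (ball (0::'a) d) z * ennreal (G (norm z)) \<partial>lborel) < \<infinity>"
  proof -
    have "(\<integral>\<^sup>+ z. indicator (ball (0::'a) d) z * ennreal (G (norm z)) \<partial>lborel)
      = (\<integral>\<^sup>+ s. indicator {0<..<d} s * ennreal (real ?N * ?w * s ^ (?N - 1)) * ennreal (G s) \<partial>lborel)"
      using d by (intro radial_integral) auto
    also have "\<dots> \<le> (\<integral>\<^sup>+ s. ennreal (real ?N * ?w) * (indicator {0<..s0} s * ennreal (lm s) + ennreal (w s * lm s / s) * indicator {0<..<\<rho>} s) \<partial>lborel)"
    proof (intro nn_integral_mono)
      fix s :: real
      show "indicator {0<..<d} s * ennreal (real ?N * ?w * s ^ (?N - 1)) * ennreal (G s)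
          \<le> ennreal (real ?N * ?w) * (indicator {0<..s0} s * ennreal (lm s) + ennreal (w s * lm s / s) * indicator {0<..<\<rho>} s)"
      proof (cases "s \<in> {0<..<d}")
        case False thus ?thesis by simp
      next
        case True
        hence s: "0 < s" "s < d" "s \<le> s0" "s < \<rho>" using d by auto
        have lms: "lm s > 0" using lm_eq[of s] ell_pos[of s] s by simp
        have ws: "w s \<ge> 0" using w_nonneg s by simp
        have pw: "s ^ ?N = s ^ (?N - 1) * s" using Npos by (metis power_minus_mult)
        have E1: "real ?N * ?w * s ^ (?N - 1) * G s = real ?N * ?w * (lm s + w s * lm s / s)"
          unfolding G_def wm_eq[OF less_imp_le[OF s(1)]] pw using s by (simp add: field_simps)
        have E2: "ennreal (real ?N * ?w * s ^ (?N - 1)) * ennreal (G s) = ennreal (real ?N * ?w * s ^ (?N - 1) * G s)"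
          using s lms ws unfolding G_def wm_eq[OF less_imp_le[OF s(1)]]
          by (intro ennreal_mult[symmetric]) auto
        have E3: "ennreal (real ?N * ?w) * (ennreal (lm s) + ennreal (w s * lm s / s)) = ennreal (real ?N * ?w * (lm s + w s * lm s / s))"
          using s lms ws by (simp add: ennreal_mult ennreal_plus[symmetric] del: ennreal_plus)
        have "indicator {0<..<d} s * ennreal (real ?N * ?w * s ^ (?N - 1)) * ennreal (G s)
            = ennreal (real ?N * ?w * s ^ (?N - 1)) * ennreal (G s)" using True by simp
        also have "\<dots> = ennreal (real ?N * ?w * s ^ (?N - 1) * G s)" by (rule E2)
        also have "\<dots> = ennreal (real ?N * ?w * (lm s + w s * lm s / s))" by (simp only: E1)
        also have "\<dots> = ennreal (real ?N * ?w) * (ennreal (lm s) + ennreal (w s * lm s / s))" by (rule E3[symmetric])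
        also have "\<dots> = ennreal (real ?N * ?w) * (indicator {0<..s0} s * ennreal (lm s) + ennreal (w s * lm s / s) * indicator {0<..<\<rho>} s)"
          using s by simp
        finally show ?thesis by simp
      qed
    qed
    also have "\<dots> = ennreal (real ?N * ?w) * ((\<integral>\<^sup>+ s. indicator {0<..s0} s * ennreal (lm s) \<partial>lborel) + (\<integral>\<^sup>+ s. ennreal (w s * lm s / s) * indicator {0<..<\<rho>} s \<partial>lborel))"
    proof -
      have m1: "(\<lambda>s. indicator {0<..s0} s * ennreal (lm s)) \<in> borel_measurable lborel" by measurable
      have m2: "(\<lambda>s. ennreal (w s * lm s / s) * indicator {0<..<\<rho>} s) \<in> borel_measurable lborel"
      proof -
        have "(\<lambda>s. ennreal (w s * lm s / s) * indicator {0<..<\<rho>} s) = (\<lambda>s. ennreal (wm s * lm s / s) * indicator {0<..<\<rho>} s)"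
          by (intro ext) (auto simp: wm_eq indicator_def)
        thus ?thesis by simp
      qed
      show ?thesis using m1 m2 by (simp add: nn_integral_cmult nn_integral_add)
    qed
    also have "\<dots> < \<infinity>"
    proof -
      have "(\<integral>\<^sup>+ s. indicator {0<..s0} s * ennreal (lm s) \<partial>lborel) = (\<integral>\<^sup>+ s. indicator {0<..s0} s * ennreal (l s) \<partial>lborel)"
        using s0 by (intro nn_integral_cong) (auto simp: lm_eq indicator_def)
      moreover have "(\<integral>\<^sup>+ s. ennreal (w s * lm s / s) * indicator {0<..<\<rho>} s \<partial>lborel) = (\<integral>\<^sup>+ s\<in>{0<..<\<rho>}. ennreal (w s * l s / s) \<partial>lborel)"
        by (intro nn_integral_cong) (auto simp: lm_eq indicator_def)
      ultimately show ?thesis using lint int_fin by (simp add: ennreal_mult_less_top less_top)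
    qed
    finally show ?thesis .
  qed
  have I2: "(\<integral>\<^sup>+ z. ennreal (min 1 ((norm z)\<^sup>2) * K z) \<partial>lborel) < \<infinity>" using H0 .
  have "(\<integral>\<^sup>+ x\<in>E. (\<integral>\<^sup>+ y\<in>- E. ennreal (K (x - y)) \<partial>lborel) \<partial>lborel) = (\<integral>\<^sup>+ z. ennreal (K z) * \<phi> z \<partial>lborel)"
    unfolding \<phi>_def by (rule perimeter_rewrite[OF K_meas E_open])
  also have "\<dots> \<le> (\<integral>\<^sup>+ z. ennreal C * (indicator (ball 0 d) z * ennreal (G (norm z)))
      + (emeasure lborel E * ennreal (1/m)) * ennreal (min 1 ((norm z)\<^sup>2) * K z) \<partial>lborel)"
    by (intro nn_integral_mono pt)
  also have "\<dots> = ennreal C * (\<integral>\<^sup>+ z. indicator (ball (0::'a) d) z * ennreal (G (norm z)) \<partial>lborel)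
      + (emeasure lborel E * ennreal (1/m)) * (\<integral>\<^sup>+ z. ennreal (min 1 ((norm z)\<^sup>2) * K z) \<partial>lborel)"
  proof -
    have [measurable]: "ball (0::'a) d \<in> sets borel" by simp
    have f1: "(\<lambda>z::'a. indicator (ball (0::'a) d) z * ennreal (G (norm z))) \<in> borel_measurable lborel" by measurable
    have f2: "(\<lambda>z::'a. ennreal (min 1 ((norm z)\<^sup>2) * K z)) \<in> borel_measurable lborel" by measurable
    have g1: "(\<lambda>z::'a. ennreal C * (indicator (ball (0::'a) d) z * ennreal (G (norm z)))) \<in> borel_measurable lborel"
      using f1 by measurable
    have g2: "(\<lambda>z::'a. (emeasure lborel E * ennreal (1/m)) * ennreal (min 1 ((norm z)\<^sup>2) * K z)) \<in> borel_measurable lborel"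
      using f2 by measurable
    show ?thesis by (subst nn_integral_add[OF g1 g2]) (simp add: nn_integral_cmult[OF f1] nn_integral_cmult[OF f2])
  qed
  also have "\<dots> < \<infinity>"
    using I1 I2 Efin by (simp add: ennreal_mult_less_top less_top)
  finally show ?thesis .
qed


end
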